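(* Let $q\ge 1$ and assume Hypothesis (H$_q$). Then for all $x\in[a,b]$, $\lambda\in[0,1]$ and $\theta>0$, $$\big|S_f(mx,\lambda,\theta,ma,mb)\big|\le\frac{m^\theta A_1(\theta,\lambda)^{1-\frac1q}}{b-a}\Big\{(x-a)^{\theta+1}\Big(|f'(mx)|^qA_2(\alpha,\theta,\lambda)+m|f'(a)|^qA_3(\alpha,\theta,\lambda)\Big)^{\frac1q}+(b-x)^{\theta+1}\Big(|f'(mx)|^qA_2(\alpha,\theta,\lambda)+m|f'(b)|^qA_3(\alpha,\theta,\lambda)\Big)^{\frac1q}\Big\}.$$
   Context: Let $\Gamma$ denote Euler's Gamma function. Given $m\in(0,1]$, $a<b$, $x\in[a,b]$, $\lambda\in[0,1]$, $\theta>0$ and a function $f$ integrable on $[ma,mb]$, the Riemann–Liouville fractional integrals appearing below are $J^\theta_{(mx)^-}f(ma)=\frac{1}{\Gamma(\theta)}\int_{ma}^{mx}(s-ma)^{\theta-1}f(s)\,ds$ and $J^\theta_{(mx)^+}f(mb)=\frac{1}{\Gamma(\theta)}\int_{mx}^{mb}(mb-s)^{\theta-1}f(s)\,ds$ (each equal to $0$ if its interval of integration is degenerate), and $$S_f(mx,\lambda,\theta,ma,mb)=(1-\lambda)m^{\theta-1}\frac{(x-a)^\theta+(b-x)^\theta}{b-a}f(mx)+\lambda m^{\theta-1}\frac{(x-a)^\theta f(ma)+(b-x)^\theta f(mb)}{b-a}-\frac{\Gamma(\theta+1)}{m(b-a)}\Big[J^\theta_{(mx)^-}f(ma)+J^\theta_{(mx)^+}f(mb)\Big].$$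 $(\alpha,m)$-convexity: for $(\alpha,m)\in[0,1]\times(0,1]$ and an interval $K\subseteq[0,\infty)$, a function $g:K\to\mathbb{R}$ is $(\alpha,m)$-convex on $K$ if $g(tX+m(1-t)Y)\le t^\alpha g(X)+m(1-t^\alpha)g(Y)$ for all $X,Y\in K$ and $t\in[0,1]$ with $tX+m(1-t)Y\in K$ (convention $0^0=1$). Hypothesis (H$_q$): $I\subseteq[0,\infty)$ is an interval, $f:I\to\mathbb{R}$ is differentiable on the interior $I^\circ$, $m\in(0,1]$, $\alpha\in[0,1]$, $a<b$ with $ma,b\in I^\circ$, $f'$ is Lebesgue integrable on $[ma,mb]$, and $|f'|^q$ is $(\alpha,m)$-convex on $[ma,b]$. Constants: $A_1(\theta,\lambda)=\frac{2\theta\lambda^{1+\frac1\theta}+1}{\theta+1}-\lambda$, $A_2(\alpha,\theta,\lambda)=\frac{2\theta\lambda^{1+\frac{1+\alpha}{\theta}}}{(\alpha+1)(\alpha+\theta+1)}+\frac{1}{\alpha+\theta+1}-\frac{\lambda}{\alpha+1}$, $A_3(\alpha,\theta,\lambda)=A_1(\theta,\lambda)-A_2(\alpha,\theta,\lambda)$. *)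

theory Defs
  imports "HOL-Analysis.Analysis"
begin

text \<open>Power with the convention 0^0 = 1 (used for t^alpha with t in [0,1]).\<close>
definition pow0 :: "real \<Rightarrow> real \<Rightarrow> real" where
  "pow0 t e = (if e = 0 then 1 else t powr e)"

definition alpha_m_convex_on :: "real \<Rightarrow> real \<Rightarrow> real set \<Rightarrow> (real \<Rightarrow> real) \<Rightarrow> bool" where
  "alpha_m_convex_on \<alpha> m K g \<longleftrightarrow>
     (\<forall>X\<in>K. \<forall>Y\<in>K. \<forall>t\<in>{0..1}. t * X + m * (1 - t) * Y \<in> K \<longrightarrow>
        g (t * X + m * (1 - t) * Y) \<le> pow0 t \<alpha> * g X + m * (1 - pow0 t \<alpha>) * g Y)"

text \<open>Riemann--Liouville fractional integrals (Lebesgue integrals over closed intervals;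
  0 if the interval is degenerate).\<close>
definition RL_left :: "real \<Rightarrow> (real \<Rightarrow> real) \<Rightarrow> real \<Rightarrow> real \<Rightarrow> real" where
  "RL_left \<theta> f u v = (1 / Gamma \<theta>) * (LINT s:{v..u}|lborel. (s - v) powr (\<theta> - 1) * f s)"


definition RL_right :: "real \<Rightarrow> (real \<Rightarrow> real) \<Rightarrow> real \<Rightarrow> real \<Rightarrow> real" where
  "RL_right \<theta> f u w = (1 / Gamma \<theta>) * (LINT s:{u..w}|lborel. (w - s) powr (\<theta> - 1) * f s)"

definition S_f :: "(real \<Rightarrow> real) \<Rightarrow> real \<Rightarrow> real \<Rightarrow> real \<Rightarrow> real \<Rightarrow> real \<Rightarrow> real \<Rightarrow> real" where
  "S_f f m x l \<theta> a b =
     (1 - l) * m powr (\<theta> - 1) * (((x - a) powr \<theta> + (b - x) powr \<theta>) / (b - a)) * f (m * x)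
   + l * m powr (\<theta> - 1) * (((x - a) powr \<theta> * f (m * a) + (b - x) powr \<theta> * f (m * b)) / (b - a))
   - Gamma (\<theta> + 1) / (m * (b - a)) * (RL_left \<theta> f (m * x) (m * a) + RL_right \<theta> f (m * x) (m * b))"

definition A1 :: "real \<Rightarrow> real \<Rightarrow> real" where
  "A1 \<theta> l = (2 * \<theta> * l powr (1 + 1 / \<theta>) + 1) / (\<theta> + 1) - l"

definition A2 :: "real \<Rightarrow> real \<Rightarrow> real \<Rightarrow> real" where
  "A2 \<alpha> \<theta> l = 2 * \<theta> * l powr (1 + (1 + \<alpha>) / \<theta>) / ((\<alpha> + 1) * (\<alpha> + \<theta> + 1))
     + 1 / (\<alpha> + \<theta> + 1) - l / (\<alpha> + 1)"

definition A3 :: "real \<Rightarrow> real \<Rightarrow> real \<Rightarrow> real" where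
  "A3 \<alpha> \<theta> l = A1 \<theta> l - A2 \<alpha> \<theta> l"

end

theory Submission
  imports Defs
begin

lemma pow0_pos: "t > 0 \<Longrightarrow> pow0 t e = t powr e"
  by (simp add: pow0_def)

lemma weight_integral:
  fixes \<theta> l \<beta> :: real
  assumes \<theta>: "\<theta> > 0" and l: "0 \<le> l" "l \<le> 1" and \<beta>: "\<beta> \<ge> 0"
  shows "((\<lambda>t. \<bar>t powr \<theta> - l\<bar> * pow0 t \<beta>) has_integral A2 \<beta> \<theta> l) {0..1}"
proof -
  define c where "c = l powr (1/\<theta>)"
  define L where "L = l powr (1 + (1 + \<beta>)/\<theta>)"
  have c0: "0 \<le> c" unfolding c_def by simp
  have c1: "c \<le> 1" unfolding c_def using powr_mono2[of "1/\<theta>" l 1] l \<theta> by simp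
  have cth: "c powr \<theta> = l"
    unfolding c_def using l \<theta> by (cases "l = 0") (auto simp: powr_powr)
  have cL1: "l * c powr (\<beta> + 1) = L"
  proof (cases "l = 0")
    case True then show ?thesis using \<beta> by (simp add: L_def c_def)
  next
    case False
    then have "l > 0" using l by simp
    have "l * c powr (\<beta> + 1) = l * l powr ((1+\<beta>)/\<theta>)" unfolding c_def by (simp add: powr_powr add.commute)
    also have "\<dots> = l powr (1 + (1+\<beta>)/\<theta>)" using \<open>l > 0\<close> by (simp add: powr_add)
    finally show ?thesis unfolding L_def .
  qed
  have cL2: "c powr (\<beta> + \<theta> + 1) = L"
  proof (cases "l = 0")
    case True then show ?thesis using \<beta> \<theta> by (simp add: L_def c_def)
  next
    case False
    then have "l > 0" using l by simp
    have "c powr (\<beta> + \<theta> + 1) = l powr ((\<beta> + \<theta> + 1)/\<theta>)" unfolding c_def by (simp add: powr_powr)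
    also have "(\<beta> + \<theta> + 1)/\<theta> = 1 + (1+\<beta>)/\<theta>" using \<theta> by (simp add: field_simps)
    finally show ?thesis unfolding L_def .
  qed
  define G where "G t = l * t powr (\<beta>+1)/(\<beta>+1) - t powr (\<beta>+\<theta>+1)/(\<beta>+\<theta>+1)" for t
  have contG: "continuous_on S G" if "S \<subseteq> {0..}" for S
    unfolding G_def using that \<beta> \<theta>
    by (intro continuous_intros continuous_on_powr') (auto intro!: continuous_intros)
  have derG: "(G has_real_derivative (l * t powr \<beta> - t powr (\<beta> + \<theta>))) (at t)" if "t > 0" for t
  proof -
    have "(G has_real_derivative (l * ((\<beta>+1) * t powr (\<beta>+1-1))/(\<beta>+1) - ((\<beta>+\<theta>+1) * t powr (\<beta>+\<theta>+1-1))/(\<beta>+\<theta>+1))) (at t)"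
      unfolding G_def
      by (intro DERIV_diff DERIV_cdivide DERIV_cmult has_real_derivative_powr that)
    moreover have "(l * ((\<beta>+1) * t powr (\<beta>+1-1))/(\<beta>+1) - ((\<beta>+\<theta>+1) * t powr (\<beta>+\<theta>+1-1))/(\<beta>+\<theta>+1)) = l * t powr \<beta> - t powr (\<beta> + \<theta>)"
    proof -
      have "\<beta>+1 \<noteq> 0" "\<beta>+\<theta>+1 \<noteq> 0" using \<beta> \<theta> by linarith+
      then show ?thesis by simp
    qed
    ultimately show ?thesis by simp
  qed
  have i1: "((\<lambda>t. \<bar>t powr \<theta> - l\<bar> * pow0 t \<beta>) has_integral (G c - G 0)) {0..c}"
  proof (rule fundamental_theorem_of_calculus_interior)
    show "0 \<le> c" by (rule c0)
    show "continuous_on {0..c} G" by (rule contG) auto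
    fix t assume t: "t \<in> {0<..<c}"
    have "t powr \<theta> \<le> l" using t \<theta> cth by (metis greaterThanLessThan_iff less_eq_real_def powr_mono2 order_less_imp_le)
    then have "\<bar>t powr \<theta> - l\<bar> * pow0 t \<beta> = l * t powr \<beta> - t powr (\<beta> + \<theta>)"
      using t by (simp add: pow0_pos powr_add algebra_simps)
    then show "(G has_vector_derivative \<bar>t powr \<theta> - l\<bar> * pow0 t \<beta>) (at t)"
      using derG[of t] t by (simp add: has_real_derivative_iff_has_vector_derivative)
  qed
  have i2: "((\<lambda>t. \<bar>t powr \<theta> - l\<bar> * pow0 t \<beta>) has_integral ((- G 1) - (- G c))) {c..1}"
  proof (rule fundamental_theorem_of_calculus_interior)
    show "c \<le> 1" by (rule c1)
    show "continuous_on {c..1} (\<lambda>t. - G t)" using contG[of "{c..1}"] c0 by (auto intro!: continuous_intros)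
    fix t assume t: "t \<in> {c<..<1}"
    have "l \<le> t powr \<theta>" using t \<theta> cth c0 by (metis greaterThanLessThan_iff less_eq_real_def powr_mono2 order_less_imp_le)
    then have "\<bar>t powr \<theta> - l\<bar> * pow0 t \<beta> = - (l * t powr \<beta> - t powr (\<beta> + \<theta>))"
      using t c0 by (simp add: pow0_pos powr_add algebra_simps)
    then show "((\<lambda>t. - G t) has_vector_derivative \<bar>t powr \<theta> - l\<bar> * pow0 t \<beta>) (at t)"
      using DERIV_minus[OF derG[of t]] t c0 by (simp add: has_real_derivative_iff_has_vector_derivative[symmetric])
  qed
  have "((\<lambda>t. \<bar>t powr \<theta> - l\<bar> * pow0 t \<beta>) has_integral ((G c - G 0) + ((- G 1) - (- G c)))) {0..1}"
    by (rule has_integral_combine[OF c0 c1 i1 i2])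
  moreover have "(G c - G 0) + ((- G 1) - (- G c)) = A2 \<beta> \<theta> l"
  proof -
    have Gc: "G c = L/(\<beta>+1) - L/(\<beta>+\<theta>+1)" unfolding G_def using cL1 cL2 by simp
    have G0: "G 0 = 0" unfolding G_def using \<beta> \<theta> by simp
    have G1: "G 1 = l/(\<beta>+1) - 1/(\<beta>+\<theta>+1)" unfolding G_def by simp
    have p: "\<beta>+1 > 0" "\<beta>+\<theta>+1 > 0" using \<beta> \<theta> by linarith+
    have "(G c - G 0) + ((- G 1) - (- G c)) = 2*(L/(\<beta>+1) - L/(\<beta>+\<theta>+1)) - (l/(\<beta>+1) - 1/(\<beta>+\<theta>+1))"
      unfolding Gc G0 G1 by simp
    also have "\<dots> = 2*\<theta>*L/((\<beta>+1)*(\<beta>+\<theta>+1)) + 1/(\<beta>+\<theta>+1) - l/(\<beta>+1)"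
    proof -
      have gen: "2*(L/B1 - L/B2) - (l/B1 - 1/B2) = 2*(B2-B1)*L/(B1*B2) + 1/B2 - l/B1"
        if "B1 > 0" "B2 > 0" for B1 B2 :: real
        using that by (simp add: field_simps)
      show ?thesis using gen[OF p] by simp
    qed
    also have "\<dots> = A2 \<beta> \<theta> l" unfolding A2_def L_def by (simp add: add.commute)
    finally show ?thesis .
  qed
  ultimately show ?thesis by simp
qed


lemma young_pt:
  fixes q K y :: real
  assumes q: "q \<ge> 1" and K: "K > 0" and y: "y \<ge> 0"
  shows "y powr (1/q) \<le> K powr (1/q) * (y / (K*q) + (1 - 1/q))"
proof (cases "y = 0")
  case True then show ?thesis using q K by simp
next
  case False
  then have yp: "y > 0" using y by simp
  have "(y/K) powr (1/q) * 1 powr (1 - 1/q) \<le> (1/q) * (y/K) + (1 - 1/q) * 1"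
    by (rule Youngs_inequality_0) (use q K yp in auto)
  then have "(y/K) powr (1/q) \<le> y/(K*q) + (1 - 1/q)" by (simp add: mult.commute)
  then have "K powr (1/q) * (y/K) powr (1/q) \<le> K powr (1/q) * (y/(K*q) + (1 - 1/q))"
    by (intro mult_left_mono) auto
  moreover have "K powr (1/q) * (y/K) powr (1/q) = y powr (1/q)"
    using K yp by (simp add: powr_mult[symmetric])
  ultimately show ?thesis by simp
qed

lemma holder_aux:
  fixes w \<phi> :: "real \<Rightarrow> real" and q A \<Phi> B :: real and S :: "real set"
  assumes q: "q \<ge> 1"
    and w: "\<And>t. t \<in> S \<Longrightarrow> w t \<ge> 0" and \<phi>: "\<And>t. t \<in> S \<Longrightarrow> 0 \<le> \<phi> t \<and> \<phi> t \<le> B"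
    and iw: "(w has_integral A) S" and iwf: "((\<lambda>t. w t * \<phi> t) has_integral \<Phi>) S"
    and ir: "(\<lambda>t. w t * \<phi> t powr (1/q)) integrable_on S"
  shows "integral S (\<lambda>t. w t * \<phi> t powr (1/q)) \<le> A powr (1 - 1/q) * \<Phi> powr (1/q)"
proof -
  define X where "X = integral S (\<lambda>t. w t * \<phi> t powr (1/q))"
  have A0: "A \<ge> 0" using has_integral_nonneg[OF iw] w by auto
  have P0: "\<Phi> \<ge> 0" using has_integral_nonneg[OF iwf] w \<phi> by auto
  have key: "X \<le> K powr (1/q) * (\<Phi>/(K*q) + (1 - 1/q) * A)" if K: "K > 0" for K
  proof -
    have "((\<lambda>t. K powr (1/q) * (w t * \<phi> t / (K*q) + (1 - 1/q) * w t)) has_integral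
          K powr (1/q) * (\<Phi>/(K*q) + (1 - 1/q) * A)) S"
      by (intro has_integral_mult_right has_integral_add has_integral_divide iwf iw)
    moreover have "w t * \<phi> t powr (1/q) \<le> K powr (1/q) * (w t * \<phi> t / (K*q) + (1 - 1/q) * w t)"
      if t: "t \<in> S" for t
    proof -
      have "w t * \<phi> t powr (1/q) \<le> w t * (K powr (1/q) * (\<phi> t / (K*q) + (1 - 1/q)))"
        using young_pt[OF q K, of "\<phi> t"] \<phi>[OF t] w[OF t] by (intro mult_left_mono) auto
      then show ?thesis by (simp add: algebra_simps)
    qed
    ultimately show ?thesis unfolding X_def
      using has_integral_le[OF integrable_integral[OF ir]] by blast
  qed
  show ?thesis
  proof (cases "A = 0")
    case True
    have B0: "B \<ge> 0" if "S \<noteq> {}" using \<phi> that by fastforce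
    have "X \<le> 0"
    proof (cases "S = {}")
      case True then show ?thesis unfolding X_def by simp
    next
      case False
      have "((\<lambda>t. B powr (1/q) * w t) has_integral B powr (1/q) * A) S"
        by (intro has_integral_mult_right iw)
      moreover have "w t * \<phi> t powr (1/q) \<le> B powr (1/q) * w t" if t: "t \<in> S" for t
        using powr_mono2[of "1/q" "\<phi> t" B] \<phi>[OF t] w[OF t] q
        by (simp add: mult.commute mult_left_mono)
      ultimately have "X \<le> B powr (1/q) * A" unfolding X_def
        using has_integral_le[OF integrable_integral[OF ir]] by blast
      then show ?thesis using True by simp
    qed
    moreover have "A powr (1 - 1/q) * \<Phi> powr (1/q) \<ge> 0" by simp
    ultimately show ?thesis unfolding X_def by linarith
  next
    case False
    then have Ap: "A > 0" using A0 by simp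
    show ?thesis
    proof (cases "\<Phi> = 0")
      case False
      then have Pp: "\<Phi> > 0" using P0 by simp
      have "X \<le> (\<Phi>/A) powr (1/q) * (\<Phi>/((\<Phi>/A)*q) + (1 - 1/q) * A)"
        using key[of "\<Phi>/A"] Ap Pp by simp
      also have "\<Phi>/((\<Phi>/A)*q) + (1 - 1/q) * A = A"
        using Ap Pp q by (simp add: field_simps)
      also have "(\<Phi>/A) powr (1/q) * A = A powr (1 - 1/q) * \<Phi> powr (1/q)"
        using Ap Pp by (simp add: powr_divide powr_diff)
      finally show ?thesis unfolding X_def .
    next
      case True
      have "X \<le> 0"
      proof (rule ccontr)
        assume "\<not> X \<le> 0"
        then have Xp: "X > 0" by simp
        define K where "K = (X/(A+1)) powr q"
        have Kp: "K > 0" unfolding K_def using Xp Ap by simp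
        have "K powr (1/q) = X/(A+1)" unfolding K_def using Xp Ap q by (simp add: powr_powr)
        then have "X \<le> X/(A+1) * ((1 - 1/q) * A)" using key[OF Kp] True by simp
        moreover have "X/(A+1) * ((1 - 1/q) * A) < X"
        proof -
          have "(1 - 1/q) * A < A + 1" using q Ap by (simp add: algebra_simps) (smt (verit) divide_nonneg_nonneg mult_nonneg_nonneg)
          then have "X * ((1 - 1/q) * A) < X * (A+1)" using Xp by simp
          then show ?thesis using Ap by (simp add: field_simps)
        qed
        ultimately show False by simp
      qed
      then show ?thesis unfolding X_def using True by simp
    qed
  qed
qed


lemma RL_subst:
  fixes k :: "real \<Rightarrow> real" and u v \<theta> :: real
  assumes c: "v \<noteq> u" and \<theta>: "\<theta> > 0"
  shows "(LINT s:{min u v..max u v}|lborel. \<bar>s - u\<bar> powr (\<theta>-1) * k s)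
       = \<bar>v - u\<bar> powr \<theta> * (LINT t:{0..1}|lborel. t powr (\<theta>-1) * k (u + (v-u)*t))"
proof -
  let ?c = "v - u"
  have cpos: "\<bar>?c\<bar> > 0" using c by simp
  have "(LINT s:{min u v..max u v}|lborel. \<bar>s - u\<bar> powr (\<theta>-1) * k s)
     = \<bar>?c\<bar> *\<^sub>R (\<integral>t. indicator {min u v..max u v} (u + ?c*t) *\<^sub>R (\<bar>u + ?c*t - u\<bar> powr (\<theta>-1) * k (u + ?c*t)) \<partial>lborel)"
    unfolding set_lebesgue_integral_def
    by (rule lborel_integral_real_affine) (use c in simp)
  also have "(\<lambda>t. indicator {min u v..max u v} (u + ?c*t) *\<^sub>R (\<bar>u + ?c*t - u\<bar> powr (\<theta>-1) * k (u + ?c*t)))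
      = (\<lambda>t. \<bar>?c\<bar> powr (\<theta>-1) * (indicator {0..1} t *\<^sub>R (t powr (\<theta>-1) * k (u + ?c*t))))"
  proof
    fix t
    have ind: "indicator {min u v..max u v} (u + ?c*t) = (indicator {0..1} t :: real)"
    proof (cases "u < v")
      case True
      have L: "0 \<le> ?c*t \<longleftrightarrow> 0 \<le> t" using True by (simp add: zero_le_mult_iff)
      have R: "?c*t \<le> ?c \<longleftrightarrow> t \<le> 1" using mult_le_cancel_left_pos[of ?c t 1] True by simp
      have mm: "min u v = u" "max u v = v" using True by auto
      have "u + ?c*t \<in> {min u v..max u v} \<longleftrightarrow> t \<in> {0..1}"
        unfolding mm atLeastAtMost_iff using L R by (smt (verit))
      then show ?thesis by (simp add: indicator_def)
    next
      case False
      then have vu: "v < u" using c by simp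
      have L: "?c*t \<le> 0 \<longleftrightarrow> 0 \<le> t" using vu by (simp add: mult_le_0_iff)
      have R: "?c \<le> ?c*t \<longleftrightarrow> t \<le> 1" using mult_le_cancel_left_neg[of ?c 1 t] vu by simp
      have mm: "min u v = v" "max u v = u" using vu by auto
      have "u + ?c*t \<in> {min u v..max u v} \<longleftrightarrow> t \<in> {0..1}"
        unfolding mm atLeastAtMost_iff using L R by (smt (verit))
      then show ?thesis by (simp add: indicator_def)
    qed
    show "indicator {min u v..max u v} (u + ?c*t) *\<^sub>R (\<bar>u + ?c*t - u\<bar> powr (\<theta>-1) * k (u + ?c*t))
       = \<bar>?c\<bar> powr (\<theta>-1) * (indicator {0..1} t *\<^sub>R (t powr (\<theta>-1) * k (u + ?c*t)))"
    proof (cases "t \<in> {0..1}")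
      case True
      then have "\<bar>u + ?c*t - u\<bar> = \<bar>?c\<bar> * t" by (simp add: abs_mult)
      then show ?thesis using True ind by (simp add: powr_mult)
    next
      case False then show ?thesis using ind by simp
    qed
  qed
  also have "\<bar>?c\<bar> *\<^sub>R (\<integral>t. \<bar>?c\<bar> powr (\<theta>-1) * (indicator {0..1} t *\<^sub>R (t powr (\<theta>-1) * k (u + ?c*t))) \<partial>lborel)
      = \<bar>?c\<bar> * \<bar>?c\<bar> powr (\<theta>-1) * (LINT t:{0..1}|lborel. t powr (\<theta>-1) * k (u + ?c*t))"
    unfolding set_lebesgue_integral_def by simp
  also have "\<bar>?c\<bar> * \<bar>?c\<bar> powr (\<theta>-1) = \<bar>?c\<bar> powr \<theta>"
    using cpos by (simp add: powr_add[symmetric] powr_diff)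
  finally show ?thesis by simp
qed

lemma sing_integrable:
  fixes F :: "real \<Rightarrow> real" and \<theta> :: real
  assumes F: "continuous_on {0..1} F" and \<theta>: "\<theta> > 0"
  shows "set_integrable lborel {0..1} (\<lambda>t. t powr (\<theta>-1) * F t)"
proof -
  have pw: "(\<lambda>t. t powr (\<theta>-1)) absolutely_integrable_on {0..1}"
    by (rule nonnegative_absolutely_integrable_1) (use integrable_on_powr_from_0[of "\<theta>-1" 1] \<theta> in auto)
  have "(\<lambda>t. F t * t powr (\<theta>-1)) absolutely_integrable_on {0..1}"
  proof (rule absolutely_integrable_bounded_measurable_product_real)
    show "F \<in> borel_measurable (lebesgue_on {0..1})"
      by (rule continuous_imp_measurable_on_sets_lebesgue[OF F]) auto
    show "bounded (F ` {0..1})" by (rule compact_imp_bounded, rule compact_continuous_image[OF F]) auto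
  qed (use pw in auto)
  then have leb: "integrable lebesgue (\<lambda>t. indicator {0..1} t *\<^sub>R (t powr (\<theta>-1) * F t))"
    unfolding set_integrable_def by (simp add: mult.commute)
  have meas: "(\<lambda>t. indicator {0..1} t *\<^sub>R (t powr (\<theta>-1) * F t)) \<in> borel_measurable borel"
  proof -
    have eq: "(\<lambda>t. indicator {0..1} t *\<^sub>R (t powr (\<theta>-1) * F t))
        = (\<lambda>t. indicator {0<..1} t *\<^sub>R (t powr (\<theta>-1) * F t) + indicator {0} t *\<^sub>R (0 powr (\<theta>-1) * F 0))"
      by (auto simp: indicator_def fun_eq_iff)
    have "(\<lambda>t. indicator {0<..1} t *\<^sub>R (t powr (\<theta>-1) * F t)) \<in> borel_measurable borel"
      by (rule borel_measurable_continuous_on_indicator) (auto intro!: continuous_intros continuous_on_subset[OF F])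
    then show ?thesis unfolding eq by measurable
  qed
  show ?thesis unfolding set_integrable_def
    using leb meas by (simp add: integrable_completion)
qed


lemma A1_eq: "A1 \<theta> l = A2 0 \<theta> l"
  unfolding A1_def A2_def by (simp add: add_divide_distrib)

lemma pow0_bounds: "0 \<le> t \<Longrightarrow> t \<le> 1 \<Longrightarrow> 0 \<le> \<alpha> \<Longrightarrow> 0 \<le> pow0 t \<alpha> \<and> pow0 t \<alpha> \<le> 1"
  unfolding pow0_def using powr_mono2[of \<alpha> t 1] by auto

lemma pow0_cont: "0 \<le> \<alpha> \<Longrightarrow> continuous_on {0..1} (\<lambda>t. pow0 t \<alpha>)"
proof (cases "\<alpha> = 0")
  case True then show ?thesis by (simp add: pow0_def)
next
  case False
  assume "0 \<le> \<alpha>"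
  then have "\<alpha> > 0" using False by simp
  then have "continuous_on {0..1} (\<lambda>t. t powr \<alpha>)"
    by (intro continuous_on_powr') (auto intro!: continuous_intros)
  then show ?thesis using False by (simp add: pow0_def)
qed

lemma point_integral: "(LINT s:{u..u}|lborel. (g s :: real)) = 0" for u :: real
proof -
  have "(\<lambda>s. indicator {u..u} s *\<^sub>R g s) = (\<lambda>s. g u * indicator {u} s)"
  proof
    fix s show "indicator {u..u} s *\<^sub>R g s = g u * indicator {u} s"
      by (cases "s = u") (auto simp: indicator_def)
  qed
  then show ?thesis unfolding set_lebesgue_integral_def by simp
qed

lemma side:
  fixes f f' :: "real \<Rightarrow> real" and S :: "real set" and u v \<theta> l q \<alpha> m P Q :: real
  assumes \<theta>: "\<theta> > 0" and l: "0 \<le> l" "l \<le> 1" and q: "q \<ge> 1" and \<alpha>: "0 \<le> \<alpha>" "\<alpha> \<le> 1"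
    and m: "m > 0" and P: "P \<ge> 0" and Q: "Q \<ge> 0"
    and seg: "{min u v..max u v} \<subseteq> S"
    and der: "\<And>y. y \<in> S \<Longrightarrow> (f has_real_derivative f' y) (at y)"
    and bnd: "\<And>t. t \<in> {0..1} \<Longrightarrow> \<bar>f' (u + (v-u)*t)\<bar> powr q \<le> pow0 t \<alpha> * P + m*(1 - pow0 t \<alpha>)*Q"
  shows "\<bar>\<bar>v-u\<bar> powr \<theta> * ((1-l)*f v + l*f u) - \<theta> * (LINT s:{min u v..max u v}|lborel. \<bar>s-u\<bar> powr (\<theta>-1) * f s)\<bar>
    \<le> \<bar>v-u\<bar> powr (\<theta>+1) * (A1 \<theta> l powr (1-1/q) * (P * A2 \<alpha> \<theta> l + m * Q * A3 \<alpha> \<theta> l) powr (1/q))"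
proof (cases "u = v")
  case True
  then show ?thesis using point_integral[of u] by (simp add: min_def max_def)
next
  case False
  define c where "c = v - u"
  have c0: "c \<noteq> 0" unfolding c_def using False by simp
  have gin: "u + c*t \<in> S" if "t \<in> {0..1}" for t
  proof -
    have "u + c*t \<in> {min u v..max u v}"
    proof (cases "u < v")
      case True
      have "(v-u)*t \<le> v-u" using that True by (intro mult_left_le) auto
      moreover have "0 \<le> (v-u)*t" using that True by auto
      moreover have "min u v = u" "max u v = v" using True by auto
      ultimately show ?thesis unfolding c_def by (simp only: atLeastAtMost_iff) linarith
    next
      case False
      have "(u-v)*t \<le> u-v" using that False by (intro mult_left_le) auto
      moreover have "0 \<le> (u-v)*t" using that False by auto
      moreover have "min u v = v" "max u v = u" using False c0 unfolding c_def by auto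
      moreover have "(v-u)*t = - ((u-v)*t)" by (simp add: algebra_simps)
      ultimately show ?thesis unfolding c_def by (simp only: atLeastAtMost_iff) linarith
    qed
    then show ?thesis using seg by auto
  qed
  have hd: "((\<lambda>t. f (u + c*t)) has_real_derivative f' (u + c*t) * c) (at t)" if "t \<in> {0..1}" for t
  proof -
    have d: "((\<lambda>t. u + c*t) has_real_derivative c) (at t)"
      by (auto intro!: derivative_eq_intros)
    show ?thesis using DERIV_chain2[OF der[OF gin[OF that]] d] by simp
  qed
  have Fc: "continuous_on {0..1} (\<lambda>t. f (u + c*t))"
    by (intro continuous_at_imp_continuous_on ballI) (metis hd DERIV_isCont)
  define K where "K = (LINT t:{0..1}|lborel. t powr (\<theta>-1) * f (u + c*t))"
  have Kint: "((\<lambda>t. t powr (\<theta>-1) * f (u + c*t)) has_integral K) {0..1}"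
    using set_borel_integral_eq_integral[OF sing_integrable[OF Fc \<theta>]] unfolding K_def
    by (metis integrable_integral)
  have ftc: "((\<lambda>t. \<theta> * t powr (\<theta>-1) * f (u + c*t) + f' (u + c*t) * c * (t powr \<theta> - l))
       has_integral ((1 powr \<theta> - l) * f (u + c*1) - (0 powr \<theta> - l) * f (u + c*0))) {0..1}"
  proof (rule fundamental_theorem_of_calculus_interior[where f="\<lambda>t. (t powr \<theta> - l) * f (u + c*t)"])
    show "continuous_on {0..1} (\<lambda>t. (t powr \<theta> - l) * f (u + c*t))"
      using \<theta> by (intro continuous_intros Fc continuous_on_powr') (auto intro!: continuous_intros)
    fix t :: real assume t: "t \<in> {0<..<1}"
    have d1: "((\<lambda>t. t powr \<theta> - l) has_real_derivative \<theta> * t powr (\<theta>-1)) (at t)"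
      using has_real_derivative_powr[of t \<theta>] t by (auto intro!: derivative_eq_intros)
    have "((\<lambda>t. (t powr \<theta> - l) * f (u + c*t)) has_real_derivative
        \<theta> * t powr (\<theta>-1) * f (u + c*t) + f' (u + c*t) * c * (t powr \<theta> - l)) (at t)"
      using DERIV_mult[OF d1 hd[of t]] t by simp
    then show "((\<lambda>t. (t powr \<theta> - l) * f (u + c*t)) has_vector_derivative
        \<theta> * t powr (\<theta>-1) * f (u + c*t) + f' (u + c*t) * c * (t powr \<theta> - l)) (at t)"
      by (simp add: has_real_derivative_iff_has_vector_derivative)
  qed simp
  define E where "E = (1-l)*f v + l*f u"
  have "((\<lambda>t. (\<theta> * t powr (\<theta>-1) * f (u + c*t) + f' (u + c*t) * c * (t powr \<theta> - l)) - \<theta> * (t powr (\<theta>-1) * f (u + c*t)))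
       has_integral (E - \<theta> * K)) {0..1}"
    using has_integral_diff[OF ftc has_integral_mult_right[OF Kint, of \<theta>]] \<theta>
    unfolding E_def c_def by simp
  then have "((\<lambda>t. (1/c) * (c * ((t powr \<theta> - l) * f' (u + c*t)))) has_integral (1/c) * (E - \<theta> * K)) {0..1}"
    by (intro has_integral_mult_right) (simp add: algebra_simps)
  then have Jint: "((\<lambda>t. (t powr \<theta> - l) * f' (u + c*t)) has_integral (E - \<theta> * K)/c) {0..1}"
    using c0 by simp
  define w where "w t = \<bar>t powr \<theta> - l\<bar>" for t
  define \<phi> where "\<phi> t = pow0 t \<alpha> * P + m*(1 - pow0 t \<alpha>)*Q" for t
  have \<phi>b: "0 \<le> \<phi> t \<and> \<phi> t \<le> P + m*Q" if "t \<in> {0..1}" for t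
  proof -
    have "0 \<le> pow0 t \<alpha>" "pow0 t \<alpha> \<le> 1" using pow0_bounds[of t \<alpha>] that \<alpha> by auto
    have a: "m*(1 - pow0 t \<alpha>)*Q \<le> m*Q" using m Q \<open>0 \<le> pow0 t \<alpha>\<close>
      by (simp add: mult_left_mono mult_right_mono algebra_simps)
    have b: "pow0 t \<alpha> * P \<le> P" using P \<open>pow0 t \<alpha> \<le> 1\<close> \<open>0 \<le> pow0 t \<alpha>\<close> by (simp add: mult_left_le_one_le mult_le_one)
    have c: "0 \<le> pow0 t \<alpha> * P" using P \<open>0 \<le> pow0 t \<alpha>\<close> by simp
    have d: "0 \<le> m*(1 - pow0 t \<alpha>)*Q" using m Q \<open>pow0 t \<alpha> \<le> 1\<close> by simp
    show ?thesis unfolding \<phi>_def using a b c d by linarith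
  qed
  have w0: "w t \<ge> 0" for t unfolding w_def by simp
  have wcont: "continuous_on {0..1} w" unfolding w_def
    using \<theta> by (intro continuous_intros continuous_on_powr') (auto intro!: continuous_intros)
  have \<phi>cont: "continuous_on {0..1} \<phi>" unfolding \<phi>_def
    using pow0_cont[OF \<alpha>(1)] by (intro continuous_intros) auto
  have rcont: "continuous_on {0..1} (\<lambda>t. w t * \<phi> t powr (1/q))"
    using \<phi>b q by (intro continuous_intros wcont continuous_on_powr' \<phi>cont) auto
  have pt: "norm ((t powr \<theta> - l) * f' (u + c*t)) \<le> w t * \<phi> t powr (1/q)" if t: "t \<in> {0..1}" for t
  proof -
    have "\<bar>f' (u + c*t)\<bar> \<le> \<phi> t powr (1/q)"
    proof (cases "f' (u + c*t) = 0")
      case True then show ?thesis by simp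
    next
      case False
      have "\<bar>f' (u + c*t)\<bar> = (\<bar>f' (u + c*t)\<bar> powr q) powr (1/q)"
        using False q by (simp add: powr_powr)
      also have "\<dots> \<le> \<phi> t powr (1/q)"
        using bnd[OF t] q unfolding \<phi>_def c_def by (intro powr_mono2) auto
      finally show ?thesis .
    qed
    then show ?thesis unfolding w_def by (simp add: abs_mult mult_left_mono)
  qed
  have J: "\<bar>(E - \<theta> * K)/c\<bar> \<le> integral {0..1} (\<lambda>t. w t * \<phi> t powr (1/q))"
  proof -
    have "norm (integral {0..1} (\<lambda>t. (t powr \<theta> - l) * f' (u + c*t))) \<le> integral {0..1} (\<lambda>t. w t * \<phi> t powr (1/q))"
      by (rule integral_norm_bound_integral) (use Jint rcont pt in \<open>auto intro: integrable_continuous_real\<close>)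
    then show ?thesis using integral_unique[OF Jint] by simp
  qed
  have iA: "(w has_integral A1 \<theta> l) {0..1}"
    using weight_integral[OF \<theta> l, of 0] unfolding A1_eq w_def by (simp add: pow0_def)
  have iA2: "((\<lambda>t. w t * pow0 t \<alpha>) has_integral A2 \<alpha> \<theta> l) {0..1}"
    using weight_integral[OF \<theta> l \<alpha>(1)] unfolding w_def by simp
  have iPhi: "((\<lambda>t. w t * \<phi> t) has_integral P * A2 \<alpha> \<theta> l + m * Q * A3 \<alpha> \<theta> l) {0..1}"
  proof -
    have "((\<lambda>t. P * (w t * pow0 t \<alpha>) + (m*Q) * (w t - w t * pow0 t \<alpha>)) has_integral
        P * A2 \<alpha> \<theta> l + (m * Q) * (A1 \<theta> l - A2 \<alpha> \<theta> l)) {0..1}"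
      by (intro has_integral_add has_integral_mult_right has_integral_diff iA iA2)
    moreover have "(\<lambda>t. P * (w t * pow0 t \<alpha>) + (m*Q) * (w t - w t * pow0 t \<alpha>)) = (\<lambda>t. w t * \<phi> t)"
      unfolding \<phi>_def by (simp add: fun_eq_iff algebra_simps)
    ultimately show ?thesis unfolding A3_def by simp
  qed
  have H: "integral {0..1} (\<lambda>t. w t * \<phi> t powr (1/q)) \<le> A1 \<theta> l powr (1-1/q) * (P * A2 \<alpha> \<theta> l + m * Q * A3 \<alpha> \<theta> l) powr (1/q)"
    by (rule holder_aux[OF q _ _ iA iPhi]) (use w0 \<phi>b rcont in \<open>auto intro: integrable_continuous_real\<close>)
  have RL: "(LINT s:{min u v..max u v}|lborel. \<bar>s-u\<bar> powr (\<theta>-1) * f s) = \<bar>c\<bar> powr \<theta> * K"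
    using RL_subst[OF _ \<theta>, of v u f] False unfolding K_def c_def by simp
  have "\<bar>\<bar>v-u\<bar> powr \<theta> * ((1-l)*f v + l*f u) - \<theta> * (LINT s:{min u v..max u v}|lborel. \<bar>s-u\<bar> powr (\<theta>-1) * f s)\<bar>
      = \<bar>c\<bar> powr \<theta> * \<bar>c\<bar> * \<bar>(E - \<theta> * K)/c\<bar>"
  proof -
    have e1: "\<bar>c\<bar> powr \<theta> * E - \<theta> * (\<bar>c\<bar> powr \<theta> * K) = \<bar>c\<bar> powr \<theta> * (E - \<theta>*K)"
      by (simp add: algebra_simps)
    have e2: "\<bar>E - \<theta>*K\<bar> = \<bar>c\<bar> * \<bar>(E - \<theta> * K)/c\<bar>"
      using c0 by (simp add: abs_mult abs_divide)
    show ?thesis unfolding RL E_def[symmetric] c_def[symmetric] e1 abs_mult e2 by simp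
  qed
  also have "\<bar>c\<bar> powr \<theta> * \<bar>c\<bar> = \<bar>c\<bar> powr (\<theta>+1)" using c0 by (simp add: powr_add)
  also have "\<bar>c\<bar> powr (\<theta>+1) * \<bar>(E - \<theta> * K)/c\<bar> \<le> \<bar>c\<bar> powr (\<theta>+1) * (A1 \<theta> l powr (1-1/q) * (P * A2 \<alpha> \<theta> l + m * Q * A3 \<alpha> \<theta> l) powr (1/q))"
    using J H by (intro mult_left_mono) auto
  finally show ?thesis unfolding c_def .
qed


lemma alg_id:
  fixes X1 X2 F0 Fa Fb G D m l \<theta> LL LR :: real
  assumes "m \<noteq> 0" "D \<noteq> 0" "G \<noteq> 0"
  shows "(1-l)*(X1/m + X2/m)/D*F0 + l*((X1/m)*Fa + (X2/m)*Fb)/D - \<theta>*G/(m*D)*(LL/G + LR/G)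
    = 1/(m*D) * ((X1*((1-l)*F0 + l*Fa) - \<theta>*LL) + (X2*((1-l)*F0+l*Fb) - \<theta>*LR))"
  using assms by (simp add: field_simps)

theorem theorem2p3:
  fixes f f' :: "real \<Rightarrow> real" and I :: "real set"
    and m \<alpha> a b q x l \<theta> :: real
  assumes q: "q \<ge> 1"
    and I_int: "is_interval I" and I_nonneg: "I \<subseteq> {0..}"
    and deriv: "\<And>y. y \<in> interior I \<Longrightarrow> (f has_real_derivative f' y) (at y)"
    and m: "0 < m" "m \<le> 1"
    and \<alpha>: "0 \<le> \<alpha>" "\<alpha> \<le> 1"
    and ab: "a < b" "m * a \<in> interior I" "b \<in> interior I"
    and f'_int: "set_integrable lborel {m * a..m * b} f'"
    and conv: "alpha_m_convex_on \<alpha> m {m * a..b} (\<lambda>y. \<bar>f' y\<bar> powr q)"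
    and x: "x \<in> {a..b}" and l: "l \<in> {0..1}" and \<theta>: "\<theta> > 0"
  shows "\<bar>S_f f m x l \<theta> a b\<bar> \<le>
    m powr \<theta> * A1 \<theta> l powr (1 - 1 / q) / (b - a) *
      ((x - a) powr (\<theta> + 1) *
         (\<bar>f' (m * x)\<bar> powr q * A2 \<alpha> \<theta> l + m * \<bar>f' a\<bar> powr q * A3 \<alpha> \<theta> l) powr (1 / q)
     + (b - x) powr (\<theta> + 1) *
         (\<bar>f' (m * x)\<bar> powr q * A2 \<alpha> \<theta> l + m * \<bar>f' b\<bar> powr q * A3 \<alpha> \<theta> l) powr (1 / q))"
proof -
  have a0: "a \<ge> 0"
  proof -
    have "m * a \<ge> 0" using ab(2) interior_subset I_nonneg by auto
    then show ?thesis using m by (simp add: zero_le_mult_iff)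
  qed
  have xa: "a \<le> x" "x \<le> b" using x by auto
  have l01: "0 \<le> l" "l \<le> 1" using l by auto
  have iv: "is_interval (interior I)"
    using I_int by (simp add: is_interval_convex_1)
  have sub: "{m*a..b} \<subseteq> interior I"
  proof
    fix y assume y: "y \<in> {m*a..b}"
    have "\<forall>a\<in>interior I. \<forall>b\<in>interior I. \<forall>x. a \<le> x \<and> x \<le> b \<longrightarrow> x \<in> interior I"
      using iv is_interval_1 by blast
    from this[rule_format, OF ab(2) ab(3)] y show "y \<in> interior I" by simp
  qed
  have ma_le: "m*a \<le> a" using m a0 by (simp add: mult_left_le_one_le)
  have mx_le: "m*x \<le> x" using m a0 xa by (simp add: mult_left_le_one_le)
  have mb_le: "m*b \<le> b" using m a0 ab by (simp add: mult_left_le_one_le)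
  have max_ge: "m*a \<le> m*x" "m*x \<le> m*b" using m xa by auto
  define Pm where "Pm = \<bar>f' (m * x)\<bar> powr q"
  define Ha where "Ha = A1 \<theta> l powr (1-1/q) * (Pm * A2 \<alpha> \<theta> l + m * (\<bar>f' a\<bar> powr q) * A3 \<alpha> \<theta> l) powr (1/q)"
  define Hb where "Hb = A1 \<theta> l powr (1-1/q) * (Pm * A2 \<alpha> \<theta> l + m * (\<bar>f' b\<bar> powr q) * A3 \<alpha> \<theta> l) powr (1/q)"
  define LL where "LL = (LINT s:{m*a..m*x}|lborel. (s - m*a) powr (\<theta>-1) * f s)"
  define LR where "LR = (LINT s:{m*x..m*b}|lborel. (m*b - s) powr (\<theta>-1) * f s)"
  have cvx: "\<bar>f' (t * (m*x) + m*(1-t)*Y)\<bar> powr q \<le> pow0 t \<alpha> * Pm + m*(1 - pow0 t \<alpha>)*(\<bar>f' Y\<bar> powr q)"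
    if t: "t \<in> {0..1}" and Y: "Y \<in> {m*a..b}" and Yin: "t * (m*x) + m*(1-t)*Y \<in> {m*a..b}" for t Y
    using conv t Y Yin max_ge mx_le xa unfolding alpha_m_convex_on_def Pm_def by auto
  have sideL: "\<bar>\<bar>m*x - m*a\<bar> powr \<theta> * ((1-l)*f (m*x) + l*f (m*a)) - \<theta> * LL\<bar> \<le> \<bar>m*x - m*a\<bar> powr (\<theta>+1) * Ha"
  proof -
    have LLeq: "LL = (LINT s:{min (m*a) (m*x)..max (m*a) (m*x)}|lborel. \<bar>s - m*a\<bar> powr (\<theta>-1) * f s)"
    proof -
      have mm: "min (m*a) (m*x) = m*a" "max (m*a) (m*x) = m*x" using max_ge by auto
      show ?thesis unfolding LL_def mm using max_ge by (intro set_lebesgue_integral_cong) auto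
    qed
    show ?thesis unfolding LLeq Ha_def
    proof (rule side[OF \<theta> l01 q \<alpha> m(1)])
      show "0 \<le> Pm" unfolding Pm_def by simp
      show "0 \<le> \<bar>f' a\<bar> powr q" by simp
      show "{min (m*a) (m*x)..max (m*a) (m*x)} \<subseteq> interior I" using sub max_ge mx_le xa by auto
      show "\<And>y. y \<in> interior I \<Longrightarrow> (f has_real_derivative f' y) (at y)" by (rule deriv)
      fix t :: real assume t: "t \<in> {0..1}"
      have eq: "m*a + (m*x - m*a)*t = t * (m*x) + m*(1-t)*a" by (simp add: algebra_simps)
      have "t * (m*x) + m*(1-t)*a \<in> {m*a..b}"
      proof -
        have "m*a + (m*x - m*a)*t \<ge> m*a" using t max_ge by auto
        moreover have "(m*x - m*a)*t \<le> (m*x - m*a)" using t max_ge by (intro mult_left_le) auto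
        ultimately show ?thesis unfolding eq[symmetric] using mx_le xa by auto
      qed
      then show "\<bar>f' (m*a + (m*x - m*a)*t)\<bar> powr q \<le> pow0 t \<alpha> * Pm + m*(1 - pow0 t \<alpha>)*(\<bar>f' a\<bar> powr q)"
        unfolding eq using cvx[OF t] ma_le xa by auto
    qed
  qed
  have sideR: "\<bar>\<bar>m*x - m*b\<bar> powr \<theta> * ((1-l)*f (m*x) + l*f (m*b)) - \<theta> * LR\<bar> \<le> \<bar>m*x - m*b\<bar> powr (\<theta>+1) * Hb"
  proof -
    have LReq: "LR = (LINT s:{min (m*b) (m*x)..max (m*b) (m*x)}|lborel. \<bar>s - m*b\<bar> powr (\<theta>-1) * f s)"
    proof -
      have mm: "min (m*b) (m*x) = m*x" "max (m*b) (m*x) = m*b" using max_ge by auto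
      show ?thesis unfolding LR_def mm using max_ge by (intro set_lebesgue_integral_cong) auto
    qed
    show ?thesis unfolding LReq Hb_def
    proof (rule side[OF \<theta> l01 q \<alpha> m(1)])
      show "0 \<le> Pm" unfolding Pm_def by simp
      show "0 \<le> \<bar>f' b\<bar> powr q" by simp
      show "{min (m*b) (m*x)..max (m*b) (m*x)} \<subseteq> interior I" using sub max_ge mb_le ma_le xa by auto
      show "\<And>y. y \<in> interior I \<Longrightarrow> (f has_real_derivative f' y) (at y)" by (rule deriv)
      fix t :: real assume t: "t \<in> {0..1}"
      have eq: "m*b + (m*x - m*b)*t = t * (m*x) + m*(1-t)*b" by (simp add: algebra_simps)
      have "t * (m*x) + m*(1-t)*b \<in> {m*a..b}"
      proof -
        have "m*b + (m*x - m*b)*t \<le> m*b" using t max_ge by (simp add: mult_nonpos_nonneg)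
        moreover have "(m*b - m*x)*t \<le> (m*b - m*x)" using t max_ge by (intro mult_left_le) auto
        moreover have "(m*x - m*b)*t = - ((m*b - m*x)*t)" by (simp add: algebra_simps)
        ultimately show ?thesis unfolding eq[symmetric] using mb_le max_ge by auto
      qed
      then show "\<bar>f' (m*b + (m*x - m*b)*t)\<bar> powr q \<le> pow0 t \<alpha> * Pm + m*(1 - pow0 t \<alpha>)*(\<bar>f' b\<bar> powr q)"
        unfolding eq using cvx[OF t] ma_le mb_le ab by auto
    qed
  qed
  define d1 where "d1 = x - a"
  define d2 where "d2 = b - x"
  have d1: "d1 \<ge> 0" and d2: "d2 \<ge> 0" unfolding d1_def d2_def using xa by auto
  have e1: "\<bar>m*x - m*a\<bar> = m * d1" unfolding d1_def using m xa by (simp add: algebra_simps abs_of_nonneg)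
  have e2: "\<bar>m*x - m*b\<bar> = m * d2" unfolding d2_def using m xa by (simp add: algebra_simps abs_of_nonpos)
  have G: "Gamma (\<theta> + 1) = \<theta> * Gamma \<theta>" using \<theta> by (intro Gamma_plus1) (auto dest: nonpos_Ints_nonpos)
  have Gp: "Gamma \<theta> > 0" using \<theta> by simp
  have Sf: "S_f f m x l \<theta> a b = (1/(m*(b-a))) *
     (((m*d1) powr \<theta> * ((1-l)*f (m*x) + l*f (m*a)) - \<theta> * LL) + ((m*d2) powr \<theta> * ((1-l)*f (m*x) + l*f (m*b)) - \<theta> * LR))"
  proof -
    have p1: "m powr (\<theta>-1) * d1 powr \<theta> = (m*d1) powr \<theta> / m" using m d1 by (simp add: powr_mult powr_diff)
    have p2: "m powr (\<theta>-1) * d2 powr \<theta> = (m*d2) powr \<theta> / m" using m d2 by (simp add: powr_mult powr_diff)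
    have RL1: "RL_left \<theta> f (m*x) (m*a) = LL / Gamma \<theta>" unfolding RL_left_def LL_def by simp
    have RL2: "RL_right \<theta> f (m*x) (m*b) = LR / Gamma \<theta>" unfolding RL_right_def LR_def by simp
    have "S_f f m x l \<theta> a b = (1-l) * (m powr (\<theta>-1) * d1 powr \<theta> + m powr (\<theta>-1) * d2 powr \<theta>) / (b-a) * f (m*x)
      + l * ((m powr (\<theta>-1) * d1 powr \<theta>) * f (m*a) + (m powr (\<theta>-1) * d2 powr \<theta>) * f (m*b)) / (b-a)
      - \<theta> * Gamma \<theta> / (m*(b-a)) * (LL / Gamma \<theta> + LR / Gamma \<theta>)"
      unfolding S_f_def RL1 RL2 G d1_def[symmetric] d2_def[symmetric] using ab(1) by (simp add: field_simps)
    also have "\<dots> = (1/(m*(b-a))) *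
     (((m*d1) powr \<theta> * ((1-l)*f (m*x) + l*f (m*a)) - \<theta> * LL) + ((m*d2) powr \<theta> * ((1-l)*f (m*x) + l*f (m*b)) - \<theta> * LR))"
      unfolding p1 p2 using m ab Gp by (intro alg_id) auto
    finally show ?thesis .
  qed
  have "\<bar>S_f f m x l \<theta> a b\<bar> \<le> (1/(m*(b-a))) * ((m*d1) powr (\<theta>+1) * Ha + (m*d2) powr (\<theta>+1) * Hb)"
  proof -
    have "\<bar>S_f f m x l \<theta> a b\<bar> \<le> (1/(m*(b-a))) *
     (\<bar>(m*d1) powr \<theta> * ((1-l)*f (m*x) + l*f (m*a)) - \<theta> * LL\<bar> + \<bar>(m*d2) powr \<theta> * ((1-l)*f (m*x) + l*f (m*b)) - \<theta> * LR\<bar>)"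
    proof -
      have ab1: "\<bar>1/(m*(b-a))\<bar> = 1/(m*(b-a))" using m ab by simp
      show ?thesis unfolding Sf abs_mult ab1
        by (rule mult_left_mono[OF abs_triangle_ineq]) (use m ab in simp)
    qed
    also have "\<dots> \<le> (1/(m*(b-a))) * ((m*d1) powr (\<theta>+1) * Ha + (m*d2) powr (\<theta>+1) * Hb)"
      using sideL sideR unfolding e1 e2 using m ab by (intro mult_left_mono add_mono) auto
    finally show ?thesis .
  qed
  also have "\<dots> = m powr \<theta> * A1 \<theta> l powr (1 - 1 / q) / (b - a) *
      ((x - a) powr (\<theta> + 1) *
         (\<bar>f' (m * x)\<bar> powr q * A2 \<alpha> \<theta> l + m * \<bar>f' a\<bar> powr q * A3 \<alpha> \<theta> l) powr (1 / q)
     + (b - x) powr (\<theta> + 1) *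
         (\<bar>f' (m * x)\<bar> powr q * A2 \<alpha> \<theta> l + m * \<bar>f' b\<bar> powr q * A3 \<alpha> \<theta> l) powr (1 / q))"
  proof -
    have p: "(m*d) powr (\<theta>+1) = m * (m powr \<theta> * d powr (\<theta>+1))" if "d \<ge> 0" for d
      using m that by (simp add: powr_mult powr_add)
    show ?thesis unfolding p[OF d1] p[OF d2] Ha_def Hb_def Pm_def d1_def[symmetric] d2_def[symmetric]
      using m ab by (simp add: field_simps)
  qed
  finally show ?thesis .
qed

end
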